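(* Let a countable group $G$ act freely and continuously on a Polish space $X$, let $E$ be an equivalence relation on $X$, and let $H\le G$ (acting on $X$ by restriction). (i) If $E$ is $G$-clopen then $E$ is $H$-clopen. (ii) If $E$ is $H$-clopen and $E\subseteq E^X_H$, then $E$ is $G$-clopen.
   Context: For a group $K$ acting continuously on $X$, a relation $R\subseteq X\times X$ is $K$-clopen if for every $k\in K$ the set $\{x\in X:(x,k\cdot x)\in R\}$ is clopen. $E^X_H$ is the orbit equivalence relation of the $H$-action. The action is free if $g\cdot x\ne x$ for all $x$ and all $g\ne 1_G$. *)

theory Defs
  imports "HOL-Analysis.Analysis" "HOL-Algebra.Group_Action"
begin

definition K_clopen :: "'g set \<Rightarrow> ('g \<Rightarrow> 'a::topological_space \<Rightarrow> 'a) \<Rightarrow> ('a \<times> 'a) set \<Rightarrow> bool" where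
  "K_clopen K act R \<longleftrightarrow>
     (\<forall>k\<in>K. open {x. (x, act k x) \<in> R} \<and> closed {x. (x, act k x) \<in> R})"

definition orbit_eqrel :: "'g set \<Rightarrow> ('g \<Rightarrow> 'a \<Rightarrow> 'a) \<Rightarrow> ('a \<times> 'a) set" where
  "orbit_eqrel H act = {(x, act h x) | x h. h \<in> H}"

end

theory Submission
  imports Defs
begin

theorem lemma3p5:
  fixes G :: "('g, 'b) monoid_scheme"
    and act :: "'g \<Rightarrow> 'a::polish_space \<Rightarrow> 'a"
    and E :: "('a \<times> 'a) set"
    and H :: "'g set"
  assumes "group G"
    and "countable (carrier G)"
    and "group_action G UNIV act"
    and "\<And>g. g \<in> carrier G \<Longrightarrow> continuous_on UNIV (act g)"
    and "\<And>g x. g \<in> carrier G \<Longrightarrow> g \<noteq> \<one>\<^bsub>G\<^esub> \<Longrightarrow> act g x \<noteq> x"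
    and "equiv UNIV E"
    and "subgroup H G"
  shows "(K_clopen (carrier G) act E \<longrightarrow> K_clopen H act E)
       \<and> (K_clopen H act E \<and> E \<subseteq> orbit_eqrel H act \<longrightarrow> K_clopen (carrier G) act E)"
proof -
  interpret grp: group G by fact
  interpret ga: group_action G UNIV act by fact
  have HG: "H \<subseteq> carrier G" using assms(7) subgroup.subset by blast
  have one: "act \<one>\<^bsub>G\<^esub> x = x" for x
    using ga.id_eq_one by (metis restrict_apply' UNIV_I)
  have part2: "K_clopen (carrier G) act E"
    if KH: "K_clopen H act E" and sub: "E \<subseteq> orbit_eqrel H act"
  proof -
    have "{x. (x, act g x) \<in> E} = {}" if g: "g \<in> carrier G" "g \<notin> H" for g
    proof (rule ccontr)
      assume "{x. (x, act g x) \<in> E} \<noteq> {}"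
      then obtain x where "(x, act g x) \<in> E" by blast
      with sub obtain h where h: "h \<in> H" "act g x = act h x"
        unfolding orbit_eqrel_def by blast
      have hc: "h \<in> carrier G" using h HG by blast
      have ic: "inv\<^bsub>G\<^esub> h \<in> carrier G" using hc by simp
      have "act (inv\<^bsub>G\<^esub> h \<otimes>\<^bsub>G\<^esub> g) x = act (inv\<^bsub>G\<^esub> h) (act h x)"
        using ga.composition_rule[of x "inv\<^bsub>G\<^esub> h" g] ic g h by simp
      also have "\<dots> = act (inv\<^bsub>G\<^esub> h \<otimes>\<^bsub>G\<^esub> h) x"
        using ga.composition_rule[of x "inv\<^bsub>G\<^esub> h" h] ic hc by simp
      also have "\<dots> = x" using hc one by simp
      finally have "inv\<^bsub>G\<^esub> h \<otimes>\<^bsub>G\<^esub> g = \<one>\<^bsub>G\<^esub>"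
        using assms(5)[of "inv\<^bsub>G\<^esub> h \<otimes>\<^bsub>G\<^esub> g" x] ic g by auto
      hence "g = h" using hc g
        by (metis grp.inv_equality grp.inv_inv grp.inv_closed)
      with g h show False by simp
    qed
    then show ?thesis using KH unfolding K_clopen_def by (metis closed_empty open_empty)
  qed
  show ?thesis using part2 HG unfolding K_clopen_def by blast
qed

end
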